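(* Let $\mathcal{L}$ and $\mathcal{L}'$ be lattices and let $l,l':\mathbb{N}\to\mathbb{N}$ be strictly positive functions. If $\mathcal{L}$ is $\Omega(l(n))$ and $\mathcal{L}'$ is $\Omega(l'(n))$, then the product lattice $\mathcal{L}\times\mathcal{L}'$ is $\Omega\big(l(\lfloor n/2\rfloor)\,l'(\lfloor n/2\rfloor)\big)$.
   Context: A lattice means a partially ordered set $(\mathcal{L},\sqsubseteq)$ with least element $\bot$ in which any two elements have a least upper bound $\sqcup$; $\bigsqcup S$ denotes the least upper bound of a finite set ($\bigsqcup\emptyset=\bot$). The product lattice $\mathcal{L}\times\mathcal{L}'$ has pairs ordered componentwise. The closure set of a finite $S$ is $C(S)=\{\bigsqcup S' : S'\subseteq S\}$ and $CS_{\mathcal{L}}(n)=\max\{|C(S)| : S\subseteq\mathcal{L}\text{ finite}, |S|\le n\}$. For $f,g:\mathbb{N}\to\mathbb{N}$, $f$ is $\Omega(g)$ iff there exist $N_0\in\mathbb{N}$ and rational $C>0$ with $f(n)\ge Cg(n)$ for all $n\ge N_0$. A lattice $\mathcal{L}$ is $\Omega(f(n))$ iff $CS_{\mathcal{L}}(n)$ is $\Omega(f(n))$. *)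

theory Defs
  imports Complex_Main "HOL-Library.Product_Order"
begin

text \<open>A lattice in the sense of the paper: a partial order with least element in
which any two elements have a least upper bound, i.e. a join-semilattice with bottom,
rendered by the type class combination {semilattice_sup, order_bot}.
The product lattice is the product type with the componentwise order (Product_Order).\<close>

definition lub_set :: "'a::{semilattice_sup,order_bot} set \<Rightarrow> 'a" where
  "lub_set S = Finite_Set.fold sup bot S"

definition closure_set :: "'a::{semilattice_sup,order_bot} set \<Rightarrow> 'a set" where
  "closure_set S = {lub_set S' | S'. S' \<subseteq> S}"

definition CS :: "'a::{semilattice_sup,order_bot} itself \<Rightarrow> nat \<Rightarrow> nat" where
  "CS _ n = Max {card (closure_set (S::'a set)) | S. finite S \<and> card S \<le> n}"

definition bigOmega :: "(nat \<Rightarrow> nat) \<Rightarrow> (nat \<Rightarrow> nat) \<Rightarrow> bool" where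
  "bigOmega f g \<longleftrightarrow> (\<exists>N0::nat. \<exists>C::rat. C > 0 \<and>
      (\<forall>n\<ge>N0. of_nat (f n) \<ge> C * of_nat (g n)))"

definition lattice_Omega :: "'a::{semilattice_sup,order_bot} itself \<Rightarrow> (nat \<Rightarrow> nat) \<Rightarrow> bool" where
  "lattice_Omega T f \<longleftrightarrow> bigOmega (CS T) f"

end

theory Submission
  imports Defs
begin

lemma lub_set_empty: "lub_set {} = bot"
  by (simp add: lub_set_def)

lemma lub_set_insert:
  assumes "finite S"
  shows "lub_set (insert x S) = sup x (lub_set S)"
proof -
  interpret comp_fun_idem "sup :: 'a \<Rightarrow> 'a \<Rightarrow> 'a" by (fact comp_fun_idem_sup)
  show ?thesis unfolding lub_set_def using assms by simp
qed

lemma lub_set_lub: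
  fixes S :: "'a::{semilattice_sup,order_bot} set"
  assumes "finite S"
  shows "(\<forall>x\<in>S. x \<le> lub_set S) \<and> (\<forall>u. (\<forall>x\<in>S. x \<le> u) \<longrightarrow> lub_set S \<le> u)"
  using assms
proof (induction S rule: finite_induct)
  case empty
  then show ?case by (simp add: lub_set_empty)
next
  case (insert x F)
  then show ?case by (auto simp: lub_set_insert intro: le_supI2)
qed

lemma lub_set_eqI:
  fixes S :: "'a::{semilattice_sup,order_bot} set"
  assumes "finite S" "\<forall>x\<in>S. x \<le> v" "\<forall>u. (\<forall>x\<in>S. x \<le> u) \<longrightarrow> v \<le> u"
  shows "lub_set S = v"
  using lub_set_lub[OF assms(1)] assms by (meson order.antisym)

lemma closure_set_img: "closure_set S = lub_set ` Pow S"
  unfolding closure_set_def by auto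

lemma card_closure_le:
  assumes "finite S"
  shows "card (closure_set S) \<le> 2 ^ card S"
proof -
  have "card (closure_set S) \<le> card (Pow S)"
    unfolding closure_set_img using assms by (intro card_image_le) simp
  then show ?thesis using assms by (simp add: card_Pow)
qed

lemma CS_set_finite:
  "finite {card (closure_set (S::'a::{semilattice_sup,order_bot} set)) | S. finite S \<and> card S \<le> n}"
proof (rule finite_subset[of _ "{..2^n}"])
  show "{card (closure_set (S::'a set)) | S. finite S \<and> card S \<le> n} \<subseteq> {..2^n}"
  proof
    fix m assume "m \<in> {card (closure_set (S::'a set)) | S. finite S \<and> card S \<le> n}"
    then obtain S :: "'a set" where "m = card (closure_set S)" "finite S" "card S \<le> n" by auto
    then have "m \<le> 2 ^ card S" using card_closure_le by auto
    also have "\<dots> \<le> 2 ^ n" using \<open>card S \<le> n\<close> by (simp add: power_increasing)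
    finally show "m \<in> {..2^n}" by simp
  qed
qed simp

lemma CS_ge:
  fixes S :: "'a::{semilattice_sup,order_bot} set"
  assumes "finite S" "card S \<le> n"
  shows "card (closure_set S) \<le> CS TYPE('a) n"
  unfolding CS_def using assms by (intro Max_ge[OF CS_set_finite]) auto

lemma CS_attained:
  "\<exists>S::'a::{semilattice_sup,order_bot} set. finite S \<and> card S \<le> n \<and> card (closure_set S) = CS TYPE('a) n"
proof -
  have ne: "{card (closure_set (S::'a set)) | S. finite S \<and> card S \<le> n} \<noteq> {}"
    by (rule ccontr) (use finite.emptyI in \<open>auto\<close>)
  have "CS TYPE('a) n \<in> {card (closure_set (S::'a set)) | S. finite S \<and> card S \<le> n}"
    unfolding CS_def by (rule Max_in[OF CS_set_finite ne])
  then show ?thesis by auto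
qed

lemma lub_prod:
  fixes A :: "'a::{semilattice_sup,order_bot} set" and B :: "'b::{semilattice_sup,order_bot} set"
  assumes "finite A" "finite B"
  shows "lub_set ((A \<times> {bot}) \<union> ({bot} \<times> B)) = (lub_set A, lub_set B)"
proof (rule lub_set_eqI)
  show "finite (A \<times> {bot} \<union> {bot} \<times> B)" using assms by simp
  show "\<forall>x\<in>A \<times> {bot} \<union> {bot} \<times> B. x \<le> (lub_set A, lub_set B)"
    using lub_set_lub[OF assms(1)] lub_set_lub[OF assms(2)]
    by (auto simp: less_eq_prod_def)
  show "\<forall>u. (\<forall>x\<in>A \<times> {bot} \<union> {bot} \<times> B. x \<le> u) \<longrightarrow> (lub_set A, lub_set B) \<le> u"
  proof (intro allI impI)
    fix u :: "'a \<times> 'b" assume h: "\<forall>x\<in>A \<times> {bot} \<union> {bot} \<times> B. x \<le> u"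
    have "\<forall>a\<in>A. a \<le> fst u"
    proof
      fix a assume "a \<in> A"
      then have "(a, bot) \<le> u" using h by blast
      then show "a \<le> fst u" by (simp add: less_eq_prod_def)
    qed
    then have 1: "lub_set A \<le> fst u" using lub_set_lub[OF assms(1)] by blast
    have "\<forall>b\<in>B. b \<le> snd u"
    proof
      fix b assume "b \<in> B"
      then have "(bot, b) \<le> u" using h by blast
      then show "b \<le> snd u" by (simp add: less_eq_prod_def)
    qed
    then have 2: "lub_set B \<le> snd u" using lub_set_lub[OF assms(2)] by blast
    show "(lub_set A, lub_set B) \<le> u" using 1 2 by (simp add: less_eq_prod_def)
  qed
qed

lemma CS_prod_ge:
  "CS TYPE('a::{semilattice_sup,order_bot}) (n div 2) * CS TYPE('b::{semilattice_sup,order_bot}) (n div 2)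
     \<le> CS TYPE('a \<times> 'b) n"
proof -
  obtain Sa :: "'a set" where Sa: "finite Sa" "card Sa \<le> n div 2" "card (closure_set Sa) = CS TYPE('a) (n div 2)"
    using CS_attained by blast
  obtain Sb :: "'b set" where Sb: "finite Sb" "card Sb \<le> n div 2" "card (closure_set Sb) = CS TYPE('b) (n div 2)"
    using CS_attained by blast
  define S where "S = (Sa \<times> {bot}) \<union> ({bot} \<times> Sb)"
  have fS: "finite S" using Sa Sb by (simp add: S_def)
  have "card S \<le> card (Sa \<times> {bot::'b}) + card ({bot::'a} \<times> Sb)"
    unfolding S_def by (rule card_Un_le)
  also have "\<dots> = card Sa + card Sb" by (simp add: card_cartesian_product)
  also have "\<dots> \<le> n" using Sa Sb by linarith
  finally have cS: "card S \<le> n" .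
  have sub: "closure_set Sa \<times> closure_set Sb \<subseteq> closure_set S"
  proof
    fix p assume "p \<in> closure_set Sa \<times> closure_set Sb"
    then obtain A B where AB: "A \<subseteq> Sa" "B \<subseteq> Sb" "p = (lub_set A, lub_set B)"
      unfolding closure_set_def by auto
    have fin: "finite A" "finite B" using AB Sa Sb finite_subset by auto
    have "p = lub_set ((A \<times> {bot}) \<union> ({bot} \<times> B))" using lub_prod[OF fin] AB by simp
    moreover have "(A \<times> {bot}) \<union> ({bot} \<times> B) \<subseteq> S" using AB by (auto simp: S_def)
    ultimately show "p \<in> closure_set S" unfolding closure_set_def by blast
  qed
  have "CS TYPE('a) (n div 2) * CS TYPE('b) (n div 2) = card (closure_set Sa \<times> closure_set Sb)"
    using Sa Sb by (simp add: card_cartesian_product)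
  also have "\<dots> \<le> card (closure_set S)"
    using sub fS by (intro card_mono) (auto simp: closure_set_img)
  also have "\<dots> \<le> CS TYPE('a \<times> 'b) n" using CS_ge[OF fS cS] .
  finally show ?thesis .
qed

theorem mainTheorem4:
  fixes l l' :: "nat \<Rightarrow> nat"
  assumes "\<forall>n. l n > 0"
    and "\<forall>n. l' n > 0"
    and "lattice_Omega TYPE('a::{semilattice_sup,order_bot}) l"
    and "lattice_Omega TYPE('b::{semilattice_sup,order_bot}) l'"
  shows "lattice_Omega TYPE('a \<times> 'b) (\<lambda>n. l (n div 2) * l' (n div 2))"
proof -
  obtain N1 and C1 :: rat where h1: "C1 > 0" "\<forall>n\<ge>N1. of_nat (CS TYPE('a) n) \<ge> C1 * of_nat (l n)"
    using assms(3) unfolding lattice_Omega_def bigOmega_def by blast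
  obtain N2 and C2 :: rat where h2: "C2 > 0" "\<forall>n\<ge>N2. of_nat (CS TYPE('b) n) \<ge> C2 * of_nat (l' n)"
    using assms(4) unfolding lattice_Omega_def bigOmega_def by blast
  have "\<forall>n\<ge>2 * (N1 + N2). of_nat (CS TYPE('a \<times> 'b) n) \<ge> (C1 * C2) * of_nat (l (n div 2) * l' (n div 2))"
  proof (intro allI impI)
    fix n :: nat assume "n \<ge> 2 * (N1 + N2)"
    then have k1: "n div 2 \<ge> N1" and k2: "n div 2 \<ge> N2" by auto
    have a: "C1 * of_nat (l (n div 2)) \<le> of_nat (CS TYPE('a) (n div 2))" using h1 k1 by blast
    have b: "C2 * of_nat (l' (n div 2)) \<le> of_nat (CS TYPE('b) (n div 2))" using h2 k2 by blast
    have "(C1 * C2) * of_nat (l (n div 2) * l' (n div 2))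
          = (C1 * of_nat (l (n div 2))) * (C2 * of_nat (l' (n div 2)))" by (simp add: algebra_simps)
    also have "\<dots> \<le> of_nat (CS TYPE('a) (n div 2)) * of_nat (CS TYPE('b) (n div 2))"
      using a b h1(1) h2(1) by (intro mult_mono) auto
    also have "\<dots> = of_nat (CS TYPE('a) (n div 2) * CS TYPE('b) (n div 2))" by simp
    also have "\<dots> \<le> (of_nat (CS TYPE('a \<times> 'b) n) :: rat)"
      using CS_prod_ge[where 'a='a and 'b='b and n=n] by (simp only: of_nat_le_iff)
    finally show "of_nat (CS TYPE('a \<times> 'b) n) \<ge> (C1 * C2) * of_nat (l (n div 2) * l' (n div 2))" .
  qed
  moreover have "C1 * C2 > 0" using h1 h2 by simp
  ultimately show ?thesis unfolding lattice_Omega_def bigOmega_def by blast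
qed

end
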